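(* The pair $\langle \alpha^{\mathsf{v}}, \gamma^{\mathsf{v}}\rangle$ forms a Galois connection between the concrete domain $\mathcal{C}$ and the view domain $\mathcal{A}^{\mathsf{v}}$.
   Context: Setting (heap programs): $\mathit{Var}=\mathit{Var}_p\uplus\mathit{Var}_d$ are pointer/data program variables, $\mathit{Fld}=\mathit{Fld}_p\uplus\mathit{Fld}_d$ pointer/data fields, $\mathit{Addr}$ a set of addresses containing $\mathsf{null}$, $\mathit{Val}=\mathit{Addr}\uplus\mathbb{Z}$, $\mathit{Loc}$ a finite set of control locations. A stack $s:\mathit{Var}\to\mathit{Val}$ is safe if $s(\mathit{Var}_p)\subseteq\mathit{Addr}$ and $s(\mathit{Var}_d)\subseteq\mathbb{Z}$. A heap is a partial map $h:\mathit{Addr}\rightharpoonup\mathit{FldVal}$ with $\mathit{FldVal}=(\mathit{Fld}\uplus\{\mathsf{free}\})\to\mathit{Val}$; it is safe if for all $a\in\mathrm{dom}(h)$, $h(a)(\mathit{Fld}_p)\subseteq\mathit{Addr}\cap\mathrm{dom}(h)$ and $h(a)(\mathit{Fld}_d\uplus\{\mathsf{free}\})\subseteq\mathbb{Z}$; $\mathit{Heap}$ is the set of safe heaps. A state is $\langle\ell,\langle s,h\rangle\rangle$ with $\ell\in\mathit{Loc}$, $s$ a safe stack, $h$ a safe heap and $\mathrm{rng}(s)\cap\mathit{Addr}\subseteq\mathrm{dom}(h)$; $\mathit{State}$ is the set of states. The concrete domain is $\mathcal{C}=\mathcal{P}(\mathit{State})\cup\{\top\}$ ordered by $X\sqsubseteq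 Y$ iff ($X,Y$ are sets and $X\subseteq Y$) or $Y=\top$. View abstraction: the view states are $\mathit{State}^{\mathsf{v}}=\mathit{Loc}\times\{\top\}\cup\{\langle\ell,\langle s,h\rangle\rangle \mid \mathrm{dom}(h)=s(\mathit{Var}_p)\}$ (the view heap $h$ may point outside its domain, so need not be safe). The abstract domain is $\mathcal{A}^{\mathsf{v}}=(\mathcal{P}(\mathit{State}^{\mathsf{v}})\times\mathcal{P}(\mathit{Addr}\times\mathit{FldVal}))\cup\{\top\}$, ordered by componentwise subset inclusion with $\top$ as top element; it is a complete lattice. For a view heap $h$ and $H\subseteq\mathit{Addr}\times\mathit{FldVal}$ (the space invariant), the completion $H\triangleright h$ is the set of safe heaps $h'$ with $h'=h\uplus h''$ for some $h''\in\mathit{Heap}$ whose graph is contained in $H$. The concretization is $\gamma^{\mathsf{v}}(\Sigma,H)=\{\langle\ell,\langle s,h'\rangle\rangle \mid \langle\ell,\langle s,h\rangle\rangle\in\Sigma \wedge h'\in H\triangleright h\}$ and $\gamma^{\mathsf{v}}(\top)=\top$. The abstraction $\alpha^{\mathsf{v}}:\mathcal{C}\to\mathcal{A}^{\mathsf{v}}$ is defined as $\alpha^{\mathsf{v}}(\Sigma)=$ the greatest lower bound (meet) in $\mathcal{A}^{\mathsf{v}}$ of the set $\{V\in\mathcal{A}^{\mathsf{v}} \mid \Sigma\sqsubseteq\gamma^{\mathsf{v}}(V)\}$. *)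

theory Defs
  imports Main
begin

datatype 'a val = Ad 'a | Dt int

(* FldVal = (Fld + {free}) -> Val ; None encodes the extra field free *)
type_synonym ('f, 'a) fldval = "'f option \<Rightarrow> 'a val"
type_synonym ('v, 'a) stack = "'v \<Rightarrow> 'a val"
type_synonym ('f, 'a) heap = "'a \<rightharpoonup> ('f, 'a) fldval"

(* Vp : pointer variables (Var_d is its complement); Fp : pointer fields *)
definition safe_stack :: "'v set \<Rightarrow> ('v, 'a) stack \<Rightarrow> bool" where
  "safe_stack Vp s \<longleftrightarrow>
     (\<forall>x\<in>Vp. \<exists>b. s x = Ad b) \<and> (\<forall>x. x \<notin> Vp \<longrightarrow> (\<exists>i. s x = Dt i))"

definition safe_heap :: "'f set \<Rightarrow> ('f, 'a) heap \<Rightarrow> bool" where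
  "safe_heap Fp h \<longleftrightarrow>
     (\<forall>a fv. h a = Some fv \<longrightarrow>
        (\<forall>f\<in>Fp. \<exists>b. fv (Some f) = Ad b \<and> b \<in> dom h) \<and>
        (\<forall>f. f \<notin> Fp \<longrightarrow> (\<exists>i. fv (Some f) = Dt i)) \<and>
        (\<exists>i. fv None = Dt i))"

type_synonym ('l, 'v, 'f, 'a) state = "'l \<times> (('v, 'a) stack \<times> ('f, 'a) heap)"

definition is_state :: "'v set \<Rightarrow> 'f set \<Rightarrow> ('l, 'v, 'f, 'a) state \<Rightarrow> bool" where
  "is_state Vp Fp st \<longleftrightarrow>
     (case st of (l, (s, h)) \<Rightarrow>
        safe_stack Vp s \<and> safe_heap Fp h \<and> {b. Ad b \<in> range s} \<subseteq> dom h)"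

datatype ('l, 'v, 'f, 'a) vstate = VTop 'l | VSt 'l "('v, 'a) stack" "('f, 'a) heap"

definition is_vstate :: "'v set \<Rightarrow> ('l, 'v, 'f, 'a) vstate \<Rightarrow> bool" where
  "is_vstate Vp vs \<longleftrightarrow>
     (case vs of VTop l \<Rightarrow> True
      | VSt l s h \<Rightarrow> safe_stack Vp s \<and> dom h = {b. \<exists>x\<in>Vp. s x = Ad b})"

datatype 'x cdom = CSet "'x set" | CTop

definition c_carrier :: "'v set \<Rightarrow> 'f set \<Rightarrow> ('l, 'v, 'f, 'a) state cdom \<Rightarrow> bool" where
  "c_carrier Vp Fp X \<longleftrightarrow>
     (case X of CTop \<Rightarrow> True | CSet S \<Rightarrow> (\<forall>st\<in>S. is_state Vp Fp st))"

definition c_le :: "'x cdom \<Rightarrow> 'x cdom \<Rightarrow> bool" where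
  "c_le X Y \<longleftrightarrow> Y = CTop \<or> (\<exists>A B. X = CSet A \<and> Y = CSet B \<and> A \<subseteq> B)"

datatype ('l, 'v, 'f, 'a) adom =
  AElem "('l, 'v, 'f, 'a) vstate set" "('a \<times> ('f, 'a) fldval) set" | ATop

definition a_carrier :: "'v set \<Rightarrow> ('l, 'v, 'f, 'a) adom \<Rightarrow> bool" where
  "a_carrier Vp V \<longleftrightarrow>
     (case V of ATop \<Rightarrow> True | AElem S H \<Rightarrow> (\<forall>vs\<in>S. is_vstate Vp vs))"

definition a_le :: "('l, 'v, 'f, 'a) adom \<Rightarrow> ('l, 'v, 'f, 'a) adom \<Rightarrow> bool" where
  "a_le V W \<longleftrightarrow> W = ATop \<or>
     (\<exists>S H S' H'. V = AElem S H \<and> W = AElem S' H' \<and> S \<subseteq> S' \<and> H \<subseteq> H')"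

definition graph_of :: "('f, 'a) heap \<Rightarrow> ('a \<times> ('f, 'a) fldval) set" where
  "graph_of h = {(a, fv). h a = Some fv}"

definition completion ::
  "'f set \<Rightarrow> ('a \<times> ('f, 'a) fldval) set \<Rightarrow> ('f, 'a) heap \<Rightarrow> ('f, 'a) heap set" where
  "completion Fp H h = {h'. safe_heap Fp h' \<and>
     (\<exists>h''. safe_heap Fp h'' \<and> graph_of h'' \<subseteq> H \<and>
            dom h \<inter> dom h'' = {} \<and> h' = h ++ h'')}"

definition gamma_v ::
  "'f set \<Rightarrow> ('l, 'v, 'f, 'a) adom \<Rightarrow> ('l, 'v, 'f, 'a) state cdom" where
  "gamma_v Fp V = (case V of ATop \<Rightarrow> CTop
     | AElem S H \<Rightarrow> CSet {(l, (s, h')). \<exists>h. VSt l s h \<in> S \<and> h' \<in> completion Fp H h})"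

definition a_is_glb :: "'v set \<Rightarrow> ('l, 'v, 'f, 'a) adom set \<Rightarrow> ('l, 'v, 'f, 'a) adom \<Rightarrow> bool" where
  "a_is_glb Vp M V \<longleftrightarrow> a_carrier Vp V \<and> (\<forall>W\<in>M. a_le V W) \<and>
     (\<forall>U. a_carrier Vp U \<and> (\<forall>W\<in>M. a_le U W) \<longrightarrow> a_le U V)"

definition alpha_v ::
  "'v set \<Rightarrow> 'f set \<Rightarrow> ('l, 'v, 'f, 'a) state cdom \<Rightarrow> ('l, 'v, 'f, 'a) adom" where
  "alpha_v Vp Fp X = (THE V. a_is_glb Vp {W. a_carrier Vp W \<and> c_le X (gamma_v Fp W)} V)"

definition galois_connection ::
  "('c \<Rightarrow> bool) \<Rightarrow> ('c \<Rightarrow> 'c \<Rightarrow> bool) \<Rightarrow> ('b \<Rightarrow> bool) \<Rightarrow> ('b \<Rightarrow> 'b \<Rightarrow> bool)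
     \<Rightarrow> ('c \<Rightarrow> 'b) \<Rightarrow> ('b \<Rightarrow> 'c) \<Rightarrow> bool" where
  "galois_connection Cc leC Ac leA \<alpha> \<gamma> \<longleftrightarrow>
     (\<forall>X. Cc X \<longrightarrow> Ac (\<alpha> X)) \<and> (\<forall>V. Ac V \<longrightarrow> Cc (\<gamma> V)) \<and>
     (\<forall>X V. Cc X \<longrightarrow> Ac V \<longrightarrow> (leA (\<alpha> X) V \<longleftrightarrow> leC X (\<gamma> V)))"

end

theory Submission
  imports Defs
begin

definition meetA :: "('l, 'v, 'f, 'a) adom set \<Rightarrow> ('l, 'v, 'f, 'a) adom" where
  "meetA M = (if \<exists>S H. AElem S H \<in> M
     then AElem (\<Inter>{S. \<exists>H. AElem S H \<in> M}) (\<Inter>{H. \<exists>S. AElem S H \<in> M}) else ATop)"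

lemma a_le_antisym: "a_le V W \<Longrightarrow> a_le W V \<Longrightarrow> V = W"
  unfolding a_le_def by (cases V; cases W) auto

lemma glb_unique: "a_is_glb Vp M V \<Longrightarrow> a_is_glb Vp M V' \<Longrightarrow> V = V'"
  unfolding a_is_glb_def by (meson a_le_antisym)

lemma meet_glb:
  assumes "\<forall>W\<in>M. a_carrier Vp W"
  shows "a_is_glb Vp M (meetA M)"
proof (cases "\<exists>S H. AElem S H \<in> M")
  case True
  then obtain S0 H0 where s0: "AElem S0 H0 \<in> M" by blast
  have car: "a_carrier Vp (meetA M)"
    using True s0 assms[rule_format, OF s0] unfolding meetA_def a_carrier_def by auto
  have lb: "\<forall>W\<in>M. a_le (meetA M) W"
  proof
    fix W assume "W \<in> M"
    then show "a_le (meetA M) W"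
    proof (cases W)
      case (AElem S H)
      then show ?thesis using True \<open>W \<in> M\<close> unfolding meetA_def a_le_def
        by (intro disjI2 exI conjI) (auto simp del: Inter_iff)
    qed (simp add: a_le_def)
  qed
  have gr: "a_le U (meetA M)" if "\<forall>W\<in>M. a_le U W" for U
  proof -
    from that s0 have "a_le U (AElem S0 H0)" by blast
    then obtain S H where U: "U = AElem S H" unfolding a_le_def by auto
    have "\<forall>S' H'. AElem S' H' \<in> M \<longrightarrow> S \<subseteq> S' \<and> H \<subseteq> H'"
      using that U unfolding a_le_def by fastforce
    then show ?thesis using True U unfolding meetA_def a_le_def by auto
  qed
  show ?thesis using car lb gr unfolding a_is_glb_def by blast
next
  case False
  then have "W = ATop" if "W \<in> M" for W using that by (cases W) auto
  then show ?thesis using False unfolding a_is_glb_def meetA_def a_le_def a_carrier_def by auto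
qed

lemma alpha_eq:
  "alpha_v Vp Fp X = meetA {W. a_carrier Vp W \<and> c_le X (gamma_v Fp W)}"
  unfolding alpha_v_def
proof (rule the_equality)
  show "a_is_glb Vp {W. a_carrier Vp W \<and> c_le X (gamma_v Fp W)} (meetA {W. a_carrier Vp W \<and> c_le X (gamma_v Fp W)})"
    by (rule meet_glb) blast
  then show "\<And>V. a_is_glb Vp {W. a_carrier Vp W \<and> c_le X (gamma_v Fp W)} V \<Longrightarrow> V = meetA {W. a_carrier Vp W \<and> c_le X (gamma_v Fp W)}"
    using glb_unique by blast
qed

lemma decomp_unique:
  assumes "h1 ++ h1'' = h2 ++ h2''" "dom h1 = dom h2"
    "dom h1 \<inter> dom h1'' = {}" "dom h2 \<inter> dom h2'' = {}"
  shows "h1 = h2 \<and> h1'' = h2''"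
proof
  show "h1 = h2"
  proof
    fix a show "h1 a = h2 a"
    proof (cases "a \<in> dom h1")
      case True
      then have "h1'' a = None" "h2'' a = None" using assms by auto
      then show ?thesis using fun_cong[OF assms(1), of a] by (simp add: map_add_def)
    next
      case False then show ?thesis using assms(2) by auto
    qed
  qed
  show "h1'' = h2''"
  proof
    fix a show "h1'' a = h2'' a"
    proof (cases "a \<in> dom h1")
      case True
      then have "a \<notin> dom h1''" "a \<notin> dom h2''" using assms by auto
      then show ?thesis by (simp add: domIff)
    next
      case False
      then have "h1 a = None" "h2 a = None" using assms(2) by auto
      then show ?thesis using fun_cong[OF assms(1), of a] by (simp add: map_add_def split: option.splits)
    qed
  qed
qed

lemma gamma_mono: "a_le V W \<Longrightarrow> c_le (gamma_v Fp V) (gamma_v Fp W)"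
  unfolding a_le_def c_le_def gamma_v_def completion_def
  by (auto, blast)

lemma c_le_trans: "c_le X Y \<Longrightarrow> c_le Y Z \<Longrightarrow> c_le X Z"
  unfolding c_le_def by auto

lemma gamma_meet:
  assumes car: "\<forall>W\<in>M. a_carrier Vp W" and le: "\<forall>W\<in>M. c_le X (gamma_v Fp W)"
  shows "c_le X (gamma_v Fp (meetA M))"
proof (cases "\<exists>S H. AElem S H \<in> M")
  case False
  then show ?thesis unfolding meetA_def gamma_v_def c_le_def by auto
next
  case True
  then obtain S0 H0 where s0: "AElem S0 H0 \<in> M" by blast
  have "c_le X (gamma_v Fp (AElem S0 H0))" using le s0 by blast
  then obtain A where XA: "X = CSet A"
    by (cases X) (auto simp: c_le_def gamma_v_def)
  have "st \<in> {(l, (s, h')). \<exists>h. VSt l s h \<in> \<Inter>{S. \<exists>H. AElem S H \<in> M}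
          \<and> h' \<in> completion Fp (\<Inter>{H. \<exists>S. AElem S H \<in> M}) h}" if st: "st \<in> A" for st
  proof -
    obtain l s h' where sts: "st = (l, (s, h'))" by (cases st) auto
    have mem: "\<exists>h. VSt l s h \<in> S \<and> h' \<in> completion Fp H h" if "AElem S H \<in> M" for S H
    proof -
      have "c_le (CSet A) (CSet {(l, (s, h')). \<exists>h. VSt l s h \<in> S \<and> h' \<in> completion Fp H h})"
        using le that XA by (force simp: gamma_v_def)
      then have "st \<in> {(l, (s, h')). \<exists>h. VSt l s h \<in> S \<and> h' \<in> completion Fp H h}"
        using st by (auto simp: c_le_def)
      then show ?thesis using sts by auto
    qed
    obtain h0 where h0: "VSt l s h0 \<in> S0" "h' \<in> completion Fp H0 h0" using mem[OF s0] by blast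
    then obtain h0'' where h0'': "safe_heap Fp h'" "safe_heap Fp h0''" "graph_of h0'' \<subseteq> H0"
      "dom h0 \<inter> dom h0'' = {}" "h' = h0 ++ h0''" unfolding completion_def by blast
    have dom0: "dom h0 = {b. \<exists>x\<in>Vp. s x = Ad b}"
      using car s0 h0(1) unfolding a_carrier_def is_vstate_def by fastforce
    have all: "VSt l s h0 \<in> S \<and> graph_of h0'' \<subseteq> H" if SH: "AElem S H \<in> M" for S H
    proof -
      obtain h where h: "VSt l s h \<in> S" "h' \<in> completion Fp H h" using mem[OF SH] by blast
      then obtain h'' where h'': "graph_of h'' \<subseteq> H"
        "dom h \<inter> dom h'' = {}" "h' = h ++ h''" unfolding completion_def by blast
      have "dom h = {b. \<exists>x\<in>Vp. s x = Ad b}"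
        using car SH h(1) unfolding a_carrier_def is_vstate_def by fastforce
      then have "h0 = h \<and> h0'' = h''"
        using decomp_unique[of h0 h0'' h h''] h'' h0'' dom0 by auto
      then show ?thesis using h h'' by auto
    qed
    have "h' \<in> completion Fp (\<Inter>{H. \<exists>S. AElem S H \<in> M}) h0"
      unfolding completion_def using h0'' all by blast
    then show ?thesis using sts all by blast
  qed
  then show ?thesis using True XA unfolding meetA_def gamma_v_def c_le_def by auto
qed

lemma gamma_carrier: "a_carrier Vp V \<Longrightarrow> c_carrier Vp Fp (gamma_v Fp V)"
proof (cases V)
  case (AElem S H)
  assume car: "a_carrier Vp V"
  have "is_state Vp Fp (l, (s, h'))" if t1: "VSt l s h \<in> S" and t2: "h' \<in> completion Fp H h" for l s h h'
  proof -
    have v: "safe_stack Vp s" "dom h = {b. \<exists>x\<in>Vp. s x = Ad b}"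
      using car AElem t1 unfolding a_carrier_def is_vstate_def by fastforce+
    obtain h'' where "safe_heap Fp h'" "h' = h ++ h''" using t2 unfolding completion_def by blast
    moreover have "{b. Ad b \<in> range s} \<subseteq> dom h"
    proof
      fix b assume "b \<in> {b. Ad b \<in> range s}"
      then obtain x where x: "s x = Ad b" by auto
      have "x \<in> Vp" using v(1) x unfolding safe_stack_def by (metis val.distinct(1))
      then show "b \<in> dom h" using v(2) x by auto
    qed
    ultimately show ?thesis using v unfolding is_state_def by auto
  qed
  then show ?thesis using AElem unfolding c_carrier_def gamma_v_def by auto
next
  case ATop then show ?thesis unfolding c_carrier_def gamma_v_def by auto
qed

theorem proposition4p1:
  fixes Vp :: "'v set" and Fp :: "'f set"
  shows "galois_connection (c_carrier Vp Fp) c_le (a_carrier Vp) a_le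
           (alpha_v Vp Fp :: ('l::finite, 'v, 'f, 'a) state cdom \<Rightarrow> _) (gamma_v Fp)"
proof -
  let ?M = "\<lambda>X :: ('l, 'v, 'f, 'a) state cdom. {W :: ('l, 'v, 'f, 'a) adom. a_carrier Vp W \<and> c_le X (gamma_v Fp W)}"
  have glb: "a_is_glb Vp (?M X) (alpha_v Vp Fp X)" for X :: "('l, 'v, 'f, 'a) state cdom"
    unfolding alpha_eq by (rule meet_glb) blast
  have self: "c_le X (gamma_v Fp (alpha_v Vp Fp X))" for X :: "('l, 'v, 'f, 'a) state cdom"
    unfolding alpha_eq by (rule gamma_meet) blast+
  show ?thesis unfolding galois_connection_def
  proof (intro conjI allI impI)
    fix X :: "('l, 'v, 'f, 'a) state cdom" show "a_carrier Vp (alpha_v Vp Fp X)" using glb[of X] unfolding a_is_glb_def by blast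
  next
    fix V :: "('l, 'v, 'f, 'a) adom" assume "a_carrier Vp V"
    then show "c_carrier Vp Fp (gamma_v Fp V)" by (rule gamma_carrier)
  next
    fix X :: "('l, 'v, 'f, 'a) state cdom" and V :: "('l, 'v, 'f, 'a) adom"
    assume cV: "a_carrier Vp V"
    show "a_le (alpha_v Vp Fp X) V = c_le X (gamma_v Fp V)"
    proof
      assume "a_le (alpha_v Vp Fp X) V"
      then show "c_le X (gamma_v Fp V)" using self[of X] gamma_mono c_le_trans by blast
    next
      assume "c_le X (gamma_v Fp V)"
      then have "V \<in> ?M X" using cV by blast
      then show "a_le (alpha_v Vp Fp X) V" using glb[of X] unfolding a_is_glb_def by blast
    qed
  qed
qed

end
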